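(* Let $s>0$, $\nu>0$, $\Lambda>1$, $\varepsilon_c>0$ and $\varepsilon\in\mathbb{R}$ be real constants, and put $\lambda=1+1/s$. For $\Lambda'>0$ let $g_{\Lambda'}(\xi)=\xi^{3}+(1+s)\nu\xi^{2}-\Lambda'\xi-s\nu\Lambda'$, and let $\xi_{\Lambda}$ and $\xi_1$ denote the unique positive real roots of $g_{\Lambda}$ and $g_{1}$ respectively. Suppose $f:\mathbb{R}\to\mathbb{R}$ is three times differentiable on $(-\infty,0)$ and on $[0,\infty)$ with one-sided limits of $f,f',f''$ at $0$ from each side, and satisfies $$0=f(\chi)-(1+s)\nu f'(\chi)-\Lambda f''(\chi)+s\nu\Lambda f'''(\chi)\quad(\chi<0),$$ $$0=f(\chi)-\varepsilon-(1+s)\nu f'(\chi)-f''(\chi)+s\nu f'''(\chi)\quad(\chi\ge 0),$$ together with the conditions $$f(-0)-s\nu f'(-0)=f(+0)-s\nu f'(+0)=\frac{\Lambda\varepsilon-\varepsilon_c}{\Lambda-1},\quad f'(-0)=f'(+0),\quad f''(-0)=f''(+0),\quad \lim_{\chi\to-\infty}f(\chi)=0,\quad \lim_{\chi\to+\infty}f(\chi)=\varepsilon,$$ where $h(\pm0)$ denotes the one-sided limit of $h$ at $0$. Then $$\tilde{\varepsilon}\equiv\frac{\varepsilon}{\varepsilon_c}=\frac{\nu\left(1+s+\frac{s\Lambda}{\xi_1\xi_\Lambda}\right)+\xi_1+\xi_\Lambda}{\nu\left(1+s\Lambda+\frac{s\Lambda}{\xi_1\xi_\Lambda}\right)+\L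ambda\xi_1+\xi_\Lambda}=\frac{\frac{\nu}{\lambda-1}\left(\frac{\Lambda}{\xi_1\xi_\Lambda}+\lambda\right)+\xi_1+\xi_\Lambda}{\frac{\nu}{\lambda-1}\left(\Lambda+\frac{\Lambda}{\xi_1\xi_\Lambda}+\lambda-1\right)+\Lambda\xi_1+\xi_\Lambda}.$$
   Context: This is the steady-state (constant crack velocity) problem for a minimal viscoelastic crack model built from Zener elements: $f$ is the dashpot strain profile in the co-moving coordinate $\chi$ (crack tip at $\chi=0$), $\nu>0$ is the dimensionless crack velocity, $s=E_0/E_1$ is a ratio of spring moduli, $\Lambda=L/l$ is the ratio of sheet height to lattice spacing, $\varepsilon$ is the applied global strain and $\varepsilon_c$ the critical breaking strain. For $s,\nu,\Lambda'>0$ the cubic $g_{\Lambda'}$ has exactly one positive real root (and two negative ones). The paper also records the positive root $\xi_\Lambda$ explicitly via Cardano's formula. *)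

theory Defs
  imports Complex_Main
begin

definition gcub :: "real \<Rightarrow> real \<Rightarrow> real \<Rightarrow> real \<Rightarrow> real" where
  "gcub s \<nu> \<Lambda>' \<xi> = \<xi>^3 + (1 + s) * \<nu> * \<xi>^2 - \<Lambda>' * \<xi> - s * \<nu> * \<Lambda>'"

end

theory Submission
  imports Defs "HOL-Analysis.Analysis"
begin

lemma within_to_at:
  fixes g :: "real \<Rightarrow> real"
  assumes "x > 0" "(g has_real_derivative D) (at x within {0..})"
  shows "(g has_real_derivative D) (at x)"
proof -
  have sub: "{0<..} \<subseteq> {0::real..}" by auto
  have "(g has_real_derivative D) (at x within {0<..})"
    by (rule DERIV_subset[OF assms(2) sub])
  moreover have "at x within {0<..} = at x"
    by (rule at_within_open) (use assms(1) in auto)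
  ultimately show ?thesis by simp
qed

lemma const_right:
  fixes y :: "real \<Rightarrow> real" and c :: real
  assumes "\<And>x. x \<ge> 0 \<Longrightarrow> (y has_real_derivative c * y x) (at x within {0..})"
  shows "\<And>x. x \<ge> 0 \<Longrightarrow> y x = y 0 * exp (c * x)"
proof -
  have "\<exists>k. \<forall>x\<in>{0..}. y x * exp (- c * x) = k"
  proof (rule has_field_derivative_zero_constant)
    show "convex {0::real..}" by (rule convex_real_interval)
    fix x :: real assume "x \<in> {0..}"
    hence d: "(y has_real_derivative c * y x) (at x within {0..})" using assms by auto
    have e: "((\<lambda>x. exp (- c * x)) has_real_derivative exp (- c * x) * (- c)) (at x within {0..})"
      by (auto intro!: derivative_eq_intros)
    have "((\<lambda>x. y x * exp (- c * x)) has_real_derivative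
           c * y x * exp (- c * x) + exp (- c * x) * (- c) * y x) (at x within {0..})"
      by (rule DERIV_mult[OF d e])
    thus "((\<lambda>x. y x * exp (- c * x)) has_real_derivative 0) (at x within {0..})"
      by (simp add: algebra_simps)
  qed
  then obtain k where k: "\<And>x. x \<ge> 0 \<Longrightarrow> y x * exp (- c * x) = k" by auto
  fix x :: real assume "x \<ge> 0"
  have "y x = y x * exp (- c * x) * exp (c * x)"
  proof -
    have "exp (- c * x) * exp (c * x) = 1" by (simp flip: exp_add)
    thus ?thesis by (simp add: mult.assoc)
  qed
  also have "\<dots> = y 0 * exp (c * x)" using k[OF \<open>x \<ge> 0\<close>] k[of 0] by simp
  finally show "y x = y 0 * exp (c * x)" .
qed

lemma const_left:
  fixes y :: "real \<Rightarrow> real" and c :: real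
  assumes "\<And>x. x < 0 \<Longrightarrow> (y has_real_derivative c * y x) (at x)"
  shows "\<exists>y0. \<forall>x<0. y x = y0 * exp (c * x)"
proof -
  have "\<exists>k. \<forall>x\<in>{..<0}. y x * exp (- c * x) = k"
  proof (rule has_field_derivative_zero_constant)
    show "convex {..<0::real}" by (rule convex_real_interval)
    fix x :: real assume "x \<in> {..<0}"
    hence d: "(y has_real_derivative c * y x) (at x within {..<0})" using assms
      by (auto intro: has_field_derivative_at_within)
    have e: "((\<lambda>x. exp (- c * x)) has_real_derivative exp (- c * x) * (- c)) (at x within {..<0})"
      by (auto intro!: derivative_eq_intros)
    have "((\<lambda>x. y x * exp (- c * x)) has_real_derivative
           c * y x * exp (- c * x) + exp (- c * x) * (- c) * y x) (at x within {..<0})"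
      by (rule DERIV_mult[OF d e])
    thus "((\<lambda>x. y x * exp (- c * x)) has_real_derivative 0) (at x within {..<0})"
      by (simp add: algebra_simps)
  qed
  then obtain k where k: "\<And>x. x < 0 \<Longrightarrow> y x * exp (- c * x) = k" by auto
  show ?thesis
  proof (intro exI allI impI)
    fix x :: real assume "x < 0"
    have "y x = y x * exp (- c * x) * exp (c * x)"
    proof -
      have "exp (- c * x) * exp (c * x) = 1" by (simp flip: exp_add)
      thus ?thesis by (simp add: mult.assoc)
    qed
    also have "\<dots> = k * exp (c * x)" using k[OF \<open>x < 0\<close>] by simp
    finally show "y x = k * exp (c * x)" .
  qed
qed

lemma energy_deriv:
  fixes u u1 :: "real \<Rightarrow> real" and B C x w :: real and S :: "real set"
  assumes d0: "(u has_real_derivative u1 x) (at x within S)" and d1: "(u1 has_real_derivative w) (at x within S)"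
    and eq: "w = B * u1 x - C * u x"
  shows "((\<lambda>x. u1 x * u1 x + C * (u x * u x)) has_real_derivative 2 * B * (u1 x * u1 x)) (at x within S)"
proof -
  have "((\<lambda>x. u1 x * u1 x + C * (u x * u x)) has_real_derivative
      (w * u1 x + w * u1 x) + C * (u1 x * u x + u1 x * u x)) (at x within S)"
    by (rule DERIV_add[OF DERIV_mult[OF d1 d1] DERIV_cmult[OF DERIV_mult[OF d0 d0]]])
  moreover have "(w * u1 x + w * u1 x) + C * (u1 x * u x + u1 x * u x) = 2 * B * (u1 x * u1 x)"
    unfolding eq by (simp add: algebra_simps)
  ultimately show ?thesis by simp
qed

lemma energy_right:
  fixes u u1 u2 :: "real \<Rightarrow> real" and B C :: real
  assumes hB: "B \<ge> 0" and hC: "C > 0"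
    and d: "\<And>x. x \<ge> 0 \<Longrightarrow> (u has_real_derivative u1 x) (at x within {0..}) \<and>
               (u1 has_real_derivative u2 x) (at x within {0..})"
    and eq: "\<And>x. x \<ge> 0 \<Longrightarrow> u2 x = B * u1 x - C * u x"
    and lim: "(u \<longlongrightarrow> 0) at_top"
  shows "u 0 = 0 \<and> u1 0 = 0"
proof (rule ccontr)
  assume nz: "\<not> (u 0 = 0 \<and> u1 0 = 0)"
  define E where "E = (\<lambda>x. u1 x * u1 x + C * (u x * u x))"
  have dE: "(E has_real_derivative 2 * B * (u1 x * u1 x)) (at x within {0..})" if "x \<ge> 0" for x
  proof -
    have d0: "(u has_real_derivative u1 x) (at x within {0..})"
      and d1: "(u1 has_real_derivative u2 x) (at x within {0..})" using d[OF that] by auto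
    show ?thesis unfolding E_def by (rule energy_deriv[OF d0 d1 eq[OF that]])
  qed
  have Enn: "E x \<ge> C * (u x * u x)" for x
    unfolding E_def by simp
  define e0 where "e0 = E 0"
  have e0pos: "e0 > 0"
  proof -
    have h: "u 0 * u 0 > 0 \<or> u1 0 * u1 0 > 0" using nz by (auto simp: zero_less_mult_iff linorder_neq_iff)
    have n1: "u 0 * u 0 \<ge> 0" and n2: "u1 0 * u1 0 \<ge> 0" by simp_all
    have n3: "C * (u 0 * u 0) \<ge> 0" using hC n1 by (simp add: mult_nonneg_nonneg)
    show ?thesis
    proof (cases "u 0 * u 0 > 0")
      case True
      hence "C * (u 0 * u 0) > 0" using hC by (simp add: mult_pos_pos)
      thus ?thesis using n2 unfolding e0_def E_def by linarith
    next
      case False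
      hence "u1 0 * u1 0 > 0" using h by simp
      thus ?thesis using n3 unfolding e0_def E_def by linarith
    qed
  qed
  have Emono: "e0 \<le> E x" if "x \<ge> 0" for x
    unfolding e0_def
  proof (rule DERIV_nonneg_imp_increasing_open[OF that])
    fix y :: real assume "0 < y" "y < x"
    have "DERIV E y :> 2 * B * (u1 y * u1 y)" using within_to_at[OF \<open>0 < y\<close> dE[of y]] \<open>0 < y\<close> by simp
    moreover have "2 * B * (u1 y * u1 y) \<ge> 0" using hB by simp
    ultimately show "\<exists>z. DERIV E y :> z \<and> z \<ge> 0" by blast
  next
    show "continuous_on {0..x} E"
    proof (rule DERIV_continuous_on[where D="\<lambda>x. 2 * B * (u1 x * u1 x)"])
      fix y assume "y \<in> {0..x}"
      hence "y \<ge> 0" by simp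
      show "(E has_real_derivative 2 * B * (u1 y * u1 y)) (at y within {0..x})"
        by (rule DERIV_subset[OF dE[OF \<open>y \<ge> 0\<close>]]) auto
    qed
  qed
  define \<eta> where "\<eta> = min 1 (e0 / (2 * (C + 4)))"
  have eta_pos: "\<eta> > 0" using e0pos hC by (simp add: \<eta>_def)
  have eta1: "\<eta> \<le> 1" by (simp add: \<eta>_def)
  have eta2: "(C + 4) * \<eta> \<le> e0 / 2"
  proof -
    have "\<eta> \<le> e0 / (2 * (C + 4))" by (simp add: \<eta>_def)
    hence "(C + 4) * \<eta> \<le> (C + 4) * (e0 / (2 * (C + 4)))" using hC by (intro mult_left_mono) auto
    also have "\<dots> = e0 / 2" using hC by (simp add: field_simps)
    finally show ?thesis .
  qed
  have "\<forall>\<^sub>F x in at_top. dist (u x) 0 < \<eta>" using tendstoD[OF lim eta_pos] .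
  then obtain X where X: "\<And>x. x \<ge> X \<Longrightarrow> \<bar>u x\<bar> < \<eta>"
    by (auto simp: eventually_at_top_linorder)
  define Y where "Y = max X 1"
  have "\<exists>z. Y < z \<and> z < Y + 1 \<and> u (Y + 1) - u Y = (Y + 1 - Y) * u1 z"
  proof (rule MVT2)
    show "Y < Y + 1" by simp
    fix x assume "Y \<le> x" "x \<le> Y + 1"
    hence "x > 0" by (simp add: Y_def)
    hence "(u has_real_derivative u1 x) (at x within {0..})" using d[of x] by simp
    thus "DERIV u x :> u1 x" by (rule within_to_at[OF \<open>x > 0\<close>])
  qed
  then obtain z where z: "z > Y" "u (Y + 1) - u Y = u1 z" by auto
  have a1: "\<bar>u (Y + 1)\<bar> < \<eta>" "\<bar>u Y\<bar> < \<eta>" "\<bar>u z\<bar> < \<eta>"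
    using X z(1) by (auto simp: Y_def)
  have "\<bar>u1 z\<bar> < 2 * \<eta>" using z(2) a1 by linarith
  hence "\<bar>u1 z\<bar> * \<bar>u1 z\<bar> < (2 * \<eta>) * (2 * \<eta>)"
    by (intro mult_strict_mono') auto
  hence s1: "u1 z * u1 z < 4 * (\<eta> * \<eta>)" by (simp add: abs_mult_self_eq)
  have "\<bar>u z\<bar> * \<bar>u z\<bar> \<le> \<eta> * \<eta>" using a1(3) by (intro mult_mono) auto
  hence "u z * u z \<le> \<eta> * \<eta>" by (simp add: abs_mult_self_eq)
  hence s2: "C * (u z * u z) \<le> C * (\<eta> * \<eta>)" using hC by (intro mult_left_mono) auto
  have ez: "E z \<ge> e0" using Emono[of z] z(1) by (simp add: Y_def)
  have eta_sq: "\<eta> * \<eta> \<le> \<eta>" using eta_pos eta1 by (simp add: mult_le_cancel_right1 less_le_not_le)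
  have "(C + 4) * (\<eta> * \<eta>) \<le> (C + 4) * \<eta>" using eta_sq hC by (intro mult_left_mono) auto
  hence "C * (\<eta> * \<eta>) + 4 * (\<eta> * \<eta>) \<le> e0 / 2" using eta2 by (simp add: algebra_simps)
  moreover have "u1 z * u1 z = E z - C * (u z * u z)" by (simp add: E_def)
  ultimately show False using s1 s2 ez e0pos by linarith
qed

lemma energy_left:
  fixes u u1 u2 :: "real \<Rightarrow> real" and B C :: real
  assumes hB: "B \<ge> 0" and hC: "C > 0"
    and d: "\<And>x. x < 0 \<Longrightarrow> (u has_real_derivative u1 x) (at x) \<and> (u1 has_real_derivative u2 x) (at x)"
    and eq: "\<And>x. x < 0 \<Longrightarrow> u2 x = B * u1 x - C * u x"
  shows "\<exists>M. \<forall>x\<le>-1. C * (u x * u x) \<le> M"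
proof -
  define E where "E = (\<lambda>x. u1 x * u1 x + C * (u x * u x))"
  have dE: "(E has_real_derivative 2 * B * (u1 x * u1 x)) (at x)" if "x < 0" for x
  proof -
    have d0: "(u has_real_derivative u1 x) (at x)"
      and d1: "(u1 has_real_derivative u2 x) (at x)" using d[OF that] by auto
    show ?thesis unfolding E_def by (rule energy_deriv[OF d0 d1 eq[OF that]])
  qed
  show ?thesis
  proof (intro exI allI impI)
    fix x :: real assume "x \<le> -1"
    have "E x \<le> E (-1)"
    proof (rule DERIV_nonneg_imp_nondecreasing[OF \<open>x \<le> -1\<close>])
      fix y :: real assume "x \<le> y" "y \<le> -1"
      thus "\<exists>z. DERIV E y :> z \<and> z \<ge> 0" using dE[of y] hB by (intro exI[of _ "2 * B * (u1 y * u1 y)"]) auto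
    qed
    thus "C * (u x * u x) \<le> E (-1)" unfolding E_def by (smt (verit) mult_nonneg_nonneg zero_le_square)
  qed
qed

lemma exp_neg_tendsto:
  fixes c :: real assumes c: "c < 0"
  shows "((\<lambda>x. exp (c * x)) \<longlongrightarrow> 0) at_top"
proof -
  have "filterlim (\<lambda>x. c * x) at_bot at_top"
    using c by (intro filterlim_tendsto_neg_mult_at_bot[OF tendsto_const]) (auto simp: filterlim_ident)
  thus ?thesis by (rule filterlim_compose[OF exp_at_bot])
qed

lemma right_limit_value:
  fixes g :: "real \<Rightarrow> real"
  assumes "(g has_real_derivative D) (at 0 within {0..})" "(g \<longlongrightarrow> L) (at_right 0)"
  shows "L = g 0"
proof -
  have "(g \<longlongrightarrow> g 0) (at 0 within {0..})"
    using DERIV_continuous[OF assms(1)] by (simp add: continuous_within)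
  hence "(g \<longlongrightarrow> g 0) (at_right 0)" by (rule tendsto_within_subset) auto
  thus ?thesis using assms(2) by (intro tendsto_unique[of "at_right (0::real)"]) auto
qed

lemma alg_right:
  fixes m \<xi> F3 F2 F1 W :: real
  assumes "m > 0" "\<xi> > 0"
  shows "m * (F3 - (1/m + 1/\<xi>) * F2 + (\<xi>/m) * F1 - (- 1/\<xi>) * (F2 - (1/m + 1/\<xi>) * F1 + (\<xi>/m) * W))
       = m * F3 - F2 + (\<xi> - 1/\<xi> - m/\<xi>^2) * F1 + W"
  using assms by (simp add: field_simps power2_eq_square)

lemma alg_left:
  fixes m \<xi> L F3 F2 F1 W :: real
  assumes "m > 0" "\<xi> > 0" "L > 0"
  shows "(m * L) * (F3 - (1/m + 1/\<xi>) * F2 + (\<xi>/(m * L)) * F1 - (- 1/\<xi>) * (F2 - (1/m + 1/\<xi>) * F1 + (\<xi>/(m*L)) * W))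
       = m * L * F3 - L * F2 + (\<xi> - L/\<xi> - m * L/\<xi>^2) * F1 + W"
  using assms by (simp add: field_simps power2_eq_square)

lemma qpos: "(a::real) < 0 \<Longrightarrow> B > 0 \<Longrightarrow> C > 0 \<Longrightarrow> a * a - B * a + C > 0"
proof -
  assume h: "a < 0" "B > 0" "C > 0"
  have "a * a > 0" using h by (simp add: mult_neg_neg)
  moreover have "B * a < 0" using h by (simp add: mult_pos_neg)
  ultimately show ?thesis using h by linarith
qed

lemma final_alg:
  fixes s \<nu> \<Lambda> \<epsilon>c \<epsilon> x1 xL K0 :: real
  assumes hs: "s > 0" and hn: "\<nu> > 0" and hL: "\<Lambda> > 1" and hc: "\<epsilon>c > 0" and h1: "x1 > 0" and hxL: "xL > 0"
    and gL: "xL ^ 3 + (1 + s) * \<nu> * xL ^ 2 - \<Lambda> * xL - s * \<nu> * \<Lambda> = 0"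
    and L: "K0 * (-1 / x1) * (-1 / x1) - (1 / (s * \<nu>) + 1 / xL) * (K0 * (-1 / x1)) + xL / (s * \<nu> * \<Lambda>) * (\<epsilon> + K0) = 0"
    and E: "\<epsilon> + K0 - s * \<nu> * (K0 * (-1 / x1)) = (\<Lambda> * \<epsilon> - \<epsilon>c) / (\<Lambda> - 1)"
  shows "\<epsilon> / \<epsilon>c = (\<nu> * (1 + s + s * \<Lambda> / (x1 * xL)) + x1 + xL) /
           (\<nu> * (1 + s * \<Lambda> + s * \<Lambda> / (x1 * xL)) + \<Lambda> * x1 + xL)"
proof -
  define m where "m = s * \<nu>"
  have m: "m > 0" using hs hn by (simp add: m_def)
  define q where "q = m * \<Lambda> * xL + \<Lambda> * x1 * xL + m * \<Lambda> * x1 + x1^2 * xL^2"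
  have A: "K0 * q + \<epsilon> * x1^2 * xL^2 = 0"
  proof -
    have "K0 * q + \<epsilon> * x1^2 * xL^2 = (m * \<Lambda> * x1^2 * xL) *
      (K0 * (-1 / x1) * (-1 / x1) - (1 / m + 1 / xL) * (K0 * (-1 / x1)) + xL / (m * \<Lambda>) * (\<epsilon> + K0))"
      using m hL h1 hxL by (simp add: q_def field_simps power2_eq_square)
    also have "\<dots> = 0" using L by (simp add: m_def)
    finally show ?thesis .
  qed
  have B: "(\<Lambda> - 1) * (\<epsilon> * x1 + K0 * (x1 + m)) = (\<Lambda> * \<epsilon> - \<epsilon>c) * x1"
  proof -
    have "(\<Lambda> - 1) * (\<epsilon> * x1 + K0 * (x1 + m)) = (\<Lambda> - 1) * x1 * (\<epsilon> + K0 - m * (K0 * (-1 / x1)))"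
      using h1 by (simp add: field_simps)
    also have "\<dots> = (\<Lambda> * \<epsilon> - \<epsilon>c) * x1" using E hL by (simp add: m_def)
    finally show ?thesis .
  qed
  have C: "\<epsilon>c * q = \<epsilon> * (q + (\<Lambda> - 1) * x1 * xL^2 * (x1 + m))"
  proof -
    have "x1 * (\<epsilon>c * q) = x1 * (\<epsilon> * (q + (\<Lambda> - 1) * x1 * xL^2 * (x1 + m)))"
    proof -
      have "q * ((\<Lambda> - 1) * (\<epsilon> * x1 + K0 * (x1 + m))) = q * ((\<Lambda> * \<epsilon> - \<epsilon>c) * x1)" using B by simp
      hence "(\<Lambda> - 1) * (\<epsilon> * x1 * q + (K0 * q) * (x1 + m)) = (\<Lambda> * \<epsilon> - \<epsilon>c) * x1 * q"
        by (simp add: algebra_simps)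
      hence "(\<Lambda> - 1) * (\<epsilon> * x1 * q + (- \<epsilon> * x1^2 * xL^2) * (x1 + m)) = (\<Lambda> * \<epsilon> - \<epsilon>c) * x1 * q"
        using A by (metis (no_types) add_eq_0_iff2 minus_mult_left)
      thus ?thesis by (simp add: algebra_simps power2_eq_square)
    qed
    thus ?thesis using h1 by simp
  qed
  define N where "N = \<nu> * (1 + s + s * \<Lambda> / (x1 * xL)) + x1 + xL"
  define D where "D = \<nu> * (1 + s * \<Lambda> + s * \<Lambda> / (x1 * xL)) + \<Lambda> * x1 + xL"
  have Dpos: "D > 0" unfolding D_def using hs hn hL h1 hxL
    by (intro add_pos_pos mult_pos_pos divide_pos_pos) auto
  have g': "\<Lambda> * xL + m * \<Lambda> = xL^3 + (1 + s) * \<nu> * xL^2" using gL by (simp add: m_def algebra_simps)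
  have hx: "\<Lambda> * x1 * xL + m * \<Lambda> * x1 = x1 * (xL^3 + (1 + s) * \<nu> * xL^2)"
  proof -
    have "\<Lambda> * x1 * xL + m * \<Lambda> * x1 = x1 * (\<Lambda> * xL + m * \<Lambda>)" by (simp add: algebra_simps)
    also have "\<dots> = x1 * (xL^3 + (1 + s) * \<nu> * xL^2)" using g' by simp
    finally show ?thesis .
  qed
  have q2: "q = m * \<Lambda> * xL + x1^2 * xL^2 + x1 * (xL^3 + (1 + s) * \<nu> * xL^2)"
    using hx unfolding q_def by linarith
  have qN: "q = xL * (x1 * xL * N)"
    unfolding q2 using h1 hxL by (simp add: N_def m_def field_simps power2_eq_square power3_eq_cube)
  have qD: "q + (\<Lambda> - 1) * x1 * xL^2 * (x1 + m) = xL * (x1 * xL * D)"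
    unfolding q2 using h1 hxL by (simp add: D_def m_def field_simps power2_eq_square power3_eq_cube)
  have "\<epsilon>c * q = \<epsilon> * (xL * (x1 * xL * D))" using C qD by simp
  hence "\<epsilon>c * (xL * (x1 * xL * N)) = \<epsilon> * (xL * (x1 * xL * D))" using qN by simp
  hence "(xL * x1 * xL) * (\<epsilon>c * N) = (xL * x1 * xL) * (\<epsilon> * D)"
    by (simp add: algebra_simps)
  hence "\<epsilon>c * N = \<epsilon> * D" using h1 hxL by simp
  thus ?thesis using Dpos hc unfolding N_def[symmetric] D_def[symmetric]
    by (simp add: field_simps)
qed

theorem theorem1:
  fixes s \<nu> \<Lambda> \<epsilon>c \<epsilon> lam \<xi>L \<xi>1 :: real
    and f f1 f2 f3 :: "real \<Rightarrow> real"
    and fm fp f1m f1p f2m f2p :: real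
  assumes hs: "s > 0" and h\<nu>: "\<nu> > 0" and h\<Lambda>: "\<Lambda> > 1" and hc: "\<epsilon>c > 0"
    and hlam: "lam = 1 + 1 / s"
    and h\<xi>L: "\<xi>L > 0" "gcub s \<nu> \<Lambda> \<xi>L = 0"
    and h\<xi>1: "\<xi>1 > 0" "gcub s \<nu> 1 \<xi>1 = 0"
    and dneg: "\<And>x. x < 0 \<Longrightarrow> (f has_real_derivative f1 x) (at x) \<and>
                   (f1 has_real_derivative f2 x) (at x) \<and> (f2 has_real_derivative f3 x) (at x)"
    and dpos: "\<And>x. x \<ge> 0 \<Longrightarrow> (f has_real_derivative f1 x) (at x within {0..}) \<and>
                   (f1 has_real_derivative f2 x) (at x within {0..}) \<and>
                   (f2 has_real_derivative f3 x) (at x within {0..})"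
    and lim_fm: "(f \<longlongrightarrow> fm) (at_left 0)" and lim_fp: "(f \<longlongrightarrow> fp) (at_right 0)"
    and lim_f1m: "(f1 \<longlongrightarrow> f1m) (at_left 0)" and lim_f1p: "(f1 \<longlongrightarrow> f1p) (at_right 0)"
    and lim_f2m: "(f2 \<longlongrightarrow> f2m) (at_left 0)" and lim_f2p: "(f2 \<longlongrightarrow> f2p) (at_right 0)"
    and ode_neg: "\<And>x. x < 0 \<Longrightarrow>
        0 = f x - (1 + s) * \<nu> * f1 x - \<Lambda> * f2 x + s * \<nu> * \<Lambda> * f3 x"
    and ode_pos: "\<And>x. x \<ge> 0 \<Longrightarrow>
        0 = f x - \<epsilon> - (1 + s) * \<nu> * f1 x - f2 x + s * \<nu> * f3 x"
    and bc1: "fm - s * \<nu> * f1m = (\<Lambda> * \<epsilon> - \<epsilon>c) / (\<Lambda> - 1)"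
    and bc2: "fp - s * \<nu> * f1p = (\<Lambda> * \<epsilon> - \<epsilon>c) / (\<Lambda> - 1)"
    and bc3: "f1m = f1p" and bc4: "f2m = f2p"
    and inf_neg: "(f \<longlongrightarrow> 0) at_bot" and inf_pos: "(f \<longlongrightarrow> \<epsilon>) at_top"
  shows "\<epsilon> / \<epsilon>c =
           (\<nu> * (1 + s + s * \<Lambda> / (\<xi>1 * \<xi>L)) + \<xi>1 + \<xi>L) /
           (\<nu> * (1 + s * \<Lambda> + s * \<Lambda> / (\<xi>1 * \<xi>L)) + \<Lambda> * \<xi>1 + \<xi>L)
       \<and> (\<nu> * (1 + s + s * \<Lambda> / (\<xi>1 * \<xi>L)) + \<xi>1 + \<xi>L) /
           (\<nu> * (1 + s * \<Lambda> + s * \<Lambda> / (\<xi>1 * \<xi>L)) + \<Lambda> * \<xi>1 + \<xi>L)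
         = (\<nu> / (lam - 1) * (\<Lambda> / (\<xi>1 * \<xi>L) + lam) + \<xi>1 + \<xi>L) /
           (\<nu> / (lam - 1) * (\<Lambda> + \<Lambda> / (\<xi>1 * \<xi>L) + lam - 1) + \<Lambda> * \<xi>1 + \<xi>L)"
proof -
  define m where "m = s * \<nu>"
  have m_pos: "m > 0" using hs h\<nu> by (simp add: m_def)
  have gL: "\<xi>L ^ 3 + (1 + s) * \<nu> * \<xi>L ^ 2 - \<Lambda> * \<xi>L - s * \<nu> * \<Lambda> = 0"
    using h\<xi>L(2) by (simp add: gcub_def)
  have g1: "\<xi>1 ^ 3 + (1 + s) * \<nu> * \<xi>1 ^ 2 - \<xi>1 - s * \<nu> = 0"
    using h\<xi>1(2) by (simp add: gcub_def)
  define a1 where "a1 = - 1 / \<xi>1"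
  define B1 where "B1 = 1 / m + 1 / \<xi>1"
  define C1 where "C1 = \<xi>1 / m"
  have a1_neg: "a1 < 0" using h\<xi>1 by (simp add: a1_def)
  have B1_pos: "B1 > 0" using h\<xi>1 m_pos unfolding B1_def by (intro add_pos_pos) auto
  have C1_pos: "C1 > 0" using h\<xi>1 m_pos by (simp add: C1_def)
  have key1: "\<xi>1 - 1 / \<xi>1 - m / \<xi>1 ^ 2 = - (1 + s) * \<nu>"
  proof -
    have "\<xi>1 ^ 2 * (\<xi>1 - 1 / \<xi>1 - m / \<xi>1 ^ 2) = \<xi>1 ^ 3 - \<xi>1 - m"
      using h\<xi>1 by (simp add: field_simps power2_eq_square power3_eq_cube)
    also have "\<dots> = \<xi>1 ^ 2 * (- (1 + s) * \<nu>)" using g1 by (simp add: m_def algebra_simps)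
    finally show ?thesis using h\<xi>1 by simp
  qed
  define y where "y = (\<lambda>x. f2 x - B1 * f1 x + C1 * (f x - \<epsilon>))"
  have dy: "(y has_real_derivative a1 * y x) (at x within {0..})" if "x \<ge> 0" for x
  proof -
    have d0: "(f has_real_derivative f1 x) (at x within {0..})"
      and d1: "(f1 has_real_derivative f2 x) (at x within {0..})"
      and d2: "(f2 has_real_derivative f3 x) (at x within {0..})" using dpos[OF that] by auto
    have d: "(y has_real_derivative f3 x - B1 * f2 x + C1 * (f1 x - 0)) (at x within {0..})"
      unfolding y_def
      by (rule DERIV_add[OF DERIV_diff[OF d2 DERIV_cmult[OF d1]] DERIV_cmult[OF DERIV_diff[OF d0 DERIV_const]]])
    have "m * (f3 x - B1 * f2 x + C1 * f1 x - a1 * y x)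
        = m * f3 x - f2 x + (\<xi>1 - 1 / \<xi>1 - m / \<xi>1 ^ 2) * f1 x + (f x - \<epsilon>)"
      unfolding y_def a1_def B1_def C1_def by (rule alg_right[OF m_pos h\<xi>1(1)])
    also have "\<dots> = f x - \<epsilon> - (1 + s) * \<nu> * f1 x - f2 x + s * \<nu> * f3 x"
      unfolding key1 by (simp add: m_def algebra_simps)
    also have "\<dots> = 0" using ode_pos[OF that] by linarith
    finally have "f3 x - B1 * f2 x + C1 * f1 x = a1 * y x" using m_pos by simp
    thus ?thesis using d by simp
  qed
  have yexp: "\<And>x. x \<ge> 0 \<Longrightarrow> y x = y 0 * exp (a1 * x)" by (rule const_right) (rule dy)
  define Q1 where "Q1 = a1 * a1 - B1 * a1 + C1"
  have Q1_pos: "Q1 > 0" unfolding Q1_def using a1_neg B1_pos C1_pos by (rule qpos)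
  define K0 where "K0 = y 0 / Q1"
  define u where "u = (\<lambda>x. f x - \<epsilon> - K0 * exp (a1 * x))"
  define u1 where "u1 = (\<lambda>x. f1 x - K0 * (exp (a1 * x) * a1))"
  define u2 where "u2 = (\<lambda>x. f2 x - K0 * (exp (a1 * x) * a1 * a1))"
  have ur: "u 0 = 0 \<and> u1 0 = 0"
  proof (rule energy_right[of B1 C1 u u1 u2])
    show "B1 \<ge> 0" "C1 > 0" using B1_pos C1_pos by auto
    fix x :: real assume x: "x \<ge> 0"
    have e1: "((\<lambda>x. exp (a1 * x)) has_real_derivative exp (a1 * x) * a1) (at x within {0..})"
      by (auto intro!: derivative_eq_intros)
    have e2: "((\<lambda>x. exp (a1 * x) * a1) has_real_derivative exp (a1 * x) * a1 * a1) (at x within {0..})"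
      by (auto intro!: derivative_eq_intros)
    have d0: "(f has_real_derivative f1 x) (at x within {0..})"
      and d1: "(f1 has_real_derivative f2 x) (at x within {0..})" using dpos[OF x] by auto
    show "(u has_real_derivative u1 x) (at x within {0..}) \<and> (u1 has_real_derivative u2 x) (at x within {0..})"
    proof
      have "(u has_real_derivative f1 x - 0 - K0 * (exp (a1 * x) * a1)) (at x within {0..})"
        unfolding u_def by (rule DERIV_diff[OF DERIV_diff[OF d0 DERIV_const] DERIV_cmult[OF e1]])
      thus "(u has_real_derivative u1 x) (at x within {0..})" by (simp add: u1_def)
      have "(u1 has_real_derivative f2 x - K0 * (exp (a1 * x) * a1 * a1)) (at x within {0..})"
        unfolding u1_def by (rule DERIV_diff[OF d1 DERIV_cmult[OF e2]])
      thus "(u1 has_real_derivative u2 x) (at x within {0..})" by (simp add: u2_def)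
    qed
    have "u2 x - (B1 * u1 x - C1 * u x) = y x - K0 * Q1 * exp (a1 * x)"
      by (simp add: u_def u1_def u2_def y_def Q1_def algebra_simps)
    also have "\<dots> = 0" using yexp[OF x] Q1_pos by (simp add: K0_def)
    finally show "u2 x = B1 * u1 x - C1 * u x" by simp
  next
    have "((\<lambda>x. f x - \<epsilon> - K0 * exp (a1 * x)) \<longlongrightarrow> \<epsilon> - \<epsilon> - K0 * 0) at_top"
      by (rule tendsto_diff[OF tendsto_diff[OF inf_pos tendsto_const] tendsto_mult[OF tendsto_const exp_neg_tendsto[OF a1_neg]]])
    thus "(u \<longlongrightarrow> 0) at_top" by (simp add: u_def)
  qed
  have f0: "f 0 = \<epsilon> + K0" using ur by (simp add: u_def)
  have f10: "f1 0 = K0 * a1" using ur by (simp add: u1_def)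
  have f20: "f2 0 = K0 * a1 * a1"
  proof -
    have "y 0 = K0 * Q1" using Q1_pos by (simp add: K0_def)
    thus ?thesis using f0 f10 by (simp add: y_def Q1_def algebra_simps)
  qed
  have fp0: "fp = f 0" using right_limit_value[OF _ lim_fp] dpos[of 0] by auto
  have f1p0: "f1p = f1 0" using right_limit_value[OF _ lim_f1p] dpos[of 0] by auto
  have f2p0: "f2p = f2 0" using right_limit_value[OF _ lim_f2p] dpos[of 0] by auto
  define a where "a = - 1 / \<xi>L"
  define BL where "BL = 1 / m + 1 / \<xi>L"
  define CL where "CL = \<xi>L / (m * \<Lambda>)"
  have a_neg: "a < 0" using h\<xi>L by (simp add: a_def)
  have BL_pos: "BL > 0" using h\<xi>L m_pos unfolding BL_def by (intro add_pos_pos) auto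
  have CL_pos: "CL > 0" using h\<xi>L m_pos h\<Lambda> by (simp add: CL_def)
  have keyL: "\<xi>L - \<Lambda> / \<xi>L - m * \<Lambda> / \<xi>L ^ 2 = - (1 + s) * \<nu>"
  proof -
    have "\<xi>L ^ 2 * (\<xi>L - \<Lambda> / \<xi>L - m * \<Lambda> / \<xi>L ^ 2) = \<xi>L ^ 3 - \<Lambda> * \<xi>L - m * \<Lambda>"
      using h\<xi>L by (simp add: field_simps power2_eq_square power3_eq_cube)
    also have "\<dots> = \<xi>L ^ 2 * (- (1 + s) * \<nu>)" using gL by (simp add: m_def algebra_simps)
    finally show ?thesis using h\<xi>L by simp
  qed
  define yL where "yL = (\<lambda>x. f2 x - BL * f1 x + CL * f x)"
  have dyL: "(yL has_real_derivative a * yL x) (at x)" if "x < 0" for x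
  proof -
    have d0: "(f has_real_derivative f1 x) (at x)"
      and d1: "(f1 has_real_derivative f2 x) (at x)"
      and d2: "(f2 has_real_derivative f3 x) (at x)" using dneg[OF that] by auto
    have d: "(yL has_real_derivative f3 x - BL * f2 x + CL * f1 x) (at x)"
      unfolding yL_def
      by (rule DERIV_add[OF DERIV_diff[OF d2 DERIV_cmult[OF d1]] DERIV_cmult[OF d0]])
    have "(m * \<Lambda>) * (f3 x - BL * f2 x + CL * f1 x - a * yL x)
        = m * \<Lambda> * f3 x - \<Lambda> * f2 x + (\<xi>L - \<Lambda> / \<xi>L - m * \<Lambda> / \<xi>L ^ 2) * f1 x + f x"
      unfolding yL_def a_def BL_def CL_def using h\<Lambda> by (intro alg_left[OF m_pos h\<xi>L(1)]) simp
    also have "\<dots> = f x - (1 + s) * \<nu> * f1 x - \<Lambda> * f2 x + s * \<nu> * \<Lambda> * f3 x"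
      unfolding keyL by (simp add: m_def algebra_simps)
    also have "\<dots> = 0" using ode_neg[OF that] by linarith
    finally have "f3 x - BL * f2 x + CL * f1 x = a * yL x" using m_pos h\<Lambda> by simp
    thus ?thesis using d by simp
  qed
  obtain y0 where yLexp: "\<And>x. x < 0 \<Longrightarrow> yL x = y0 * exp (a * x)"
    using const_left[OF dyL] by auto
  define QL where "QL = a * a - BL * a + CL"
  have QL_pos: "QL > 0" unfolding QL_def using a_neg BL_pos CL_pos by (rule qpos)
  define K where "K = y0 / QL"
  define v where "v = (\<lambda>x. f x - K * exp (a * x))"
  define v1 where "v1 = (\<lambda>x. f1 x - K * (exp (a * x) * a))"
  define v2 where "v2 = (\<lambda>x. f2 x - K * (exp (a * x) * a * a))"
  obtain M where M: "\<And>x. x \<le> -1 \<Longrightarrow> CL * (v x * v x) \<le> M"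
  proof -
    have "\<exists>M. \<forall>x\<le>-1. CL * (v x * v x) \<le> M"
    proof (rule energy_left[of BL CL v v1 v2])
      show "BL \<ge> 0" "CL > 0" using BL_pos CL_pos by auto
      fix x :: real assume x: "x < 0"
      have e1: "((\<lambda>x. exp (a * x)) has_real_derivative exp (a * x) * a) (at x)"
        by (auto intro!: derivative_eq_intros)
      have e2: "((\<lambda>x. exp (a * x) * a) has_real_derivative exp (a * x) * a * a) (at x)"
        by (auto intro!: derivative_eq_intros)
      have d0: "(f has_real_derivative f1 x) (at x)"
        and d1: "(f1 has_real_derivative f2 x) (at x)" using dneg[OF x] by auto
      show "(v has_real_derivative v1 x) (at x) \<and> (v1 has_real_derivative v2 x) (at x)"
      proof
        have "(v has_real_derivative f1 x - K * (exp (a * x) * a)) (at x)"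
          unfolding v_def by (rule DERIV_diff[OF d0 DERIV_cmult[OF e1]])
        thus "(v has_real_derivative v1 x) (at x)" by (simp add: v1_def)
        have "(v1 has_real_derivative f2 x - K * (exp (a * x) * a * a)) (at x)"
          unfolding v1_def by (rule DERIV_diff[OF d1 DERIV_cmult[OF e2]])
        thus "(v1 has_real_derivative v2 x) (at x)" by (simp add: v2_def)
      qed
      have "v2 x - (BL * v1 x - CL * v x) = yL x - K * QL * exp (a * x)"
        by (simp add: v_def v1_def v2_def yL_def QL_def algebra_simps)
      also have "\<dots> = 0" using yLexp[OF x] QL_pos by (simp add: K_def)
      finally show "v2 x = BL * v1 x - CL * v x" by simp
    qed
    thus ?thesis using that by auto
  qed
  have K0': "K = 0"
  proof (rule ccontr)
    assume Knz: "K \<noteq> 0"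
    have "\<forall>\<^sub>F x in at_bot. dist (f x) 0 < 1" using tendstoD[OF inf_neg] by simp
    then obtain X where X: "\<And>x. x \<le> X \<Longrightarrow> \<bar>f x\<bar> < 1"
      by (auto simp: eventually_at_bot_linorder)
    define T where "T = M / CL + 2"
    define x where "x = min (min X (-1)) (T / (\<bar>K\<bar> * a))"
    have xX: "x \<le> X" and x1: "x \<le> -1" by (auto simp: x_def)
    have "x \<le> T / (\<bar>K\<bar> * a)" by (simp add: x_def)
    moreover have "\<bar>K\<bar> * a < 0" using a_neg Knz by (simp add: mult_pos_neg)
    ultimately have "x * (\<bar>K\<bar> * a) \<ge> T" by (simp add: le_divide_eq)
    hence ax: "\<bar>K\<bar> * (a * x) \<ge> T" by (simp add: algebra_simps)
    have "exp (a * x) \<ge> 1 + a * x" by (rule exp_ge_add_one_self)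
    hence "exp (a * x) \<ge> a * x" by linarith
    hence "\<bar>K\<bar> * exp (a * x) \<ge> \<bar>K\<bar> * (a * x)" by (intro mult_left_mono) auto
    hence big: "\<bar>K * exp (a * x)\<bar> \<ge> T" using ax by (simp add: abs_mult)
    have "\<bar>v x\<bar> \<ge> T - 1" using big X[OF xX] unfolding v_def by linarith
    hence vbig: "\<bar>v x\<bar> \<ge> M / CL + 1" by (simp add: T_def)
    have M0: "M \<ge> 0" using M[of "-1"] CL_pos by (smt (verit) mult_nonneg_nonneg zero_le_square)
    have "M / CL + 1 \<ge> 1" using M0 CL_pos by simp
    hence "\<bar>v x\<bar> * \<bar>v x\<bar> \<ge> (M / CL + 1) * 1" using vbig by (intro mult_mono) auto
    hence "v x * v x \<ge> M / CL + 1" by (simp add: abs_mult_self_eq)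
    hence "CL * (v x * v x) \<ge> CL * (M / CL + 1)" using CL_pos by (intro mult_left_mono) auto
    also have "CL * (M / CL + 1) = M + CL" using CL_pos by (simp add: field_simps)
    finally show False using M[OF x1] CL_pos by linarith
  qed
  have yL0: "\<And>x. x < 0 \<Longrightarrow> yL x = 0"
  proof -
    fix x :: real assume "x < 0"
    have "y0 = 0" using K0' QL_pos by (simp add: K_def)
    thus "yL x = 0" using yLexp[OF \<open>x < 0\<close>] by simp
  qed
  have Lrel: "f2m - BL * f1m + CL * fm = 0"
  proof -
    have "(yL \<longlongrightarrow> f2m - BL * f1m + CL * fm) (at_left 0)"
      unfolding yL_def by (rule tendsto_add[OF tendsto_diff[OF lim_f2m tendsto_mult[OF tendsto_const lim_f1m]] tendsto_mult[OF tendsto_const lim_fm]])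
    moreover have "(yL \<longlongrightarrow> 0) (at_left 0)"
    proof (rule tendsto_eventually)
      show "\<forall>\<^sub>F x in at_left 0. yL x = 0"
        unfolding eventually_at_filter by (auto intro!: always_eventually yL0)
    qed
    ultimately show ?thesis by (intro tendsto_unique[of "at_left (0::real)"]) auto
  qed
  have fmp: "fm = fp" using bc1 bc2 bc3 by simp
  have Lf: "K0 * a1 * a1 - BL * (K0 * a1) + CL * (\<epsilon> + K0) = 0"
    using Lrel bc3 bc4 fmp fp0 f1p0 f2p0 f0 f10 f20 by simp
  hence L': "K0 * (- 1 / \<xi>1) * (- 1 / \<xi>1) - (1 / (s * \<nu>) + 1 / \<xi>L) * (K0 * (- 1 / \<xi>1))
      + \<xi>L / (s * \<nu> * \<Lambda>) * (\<epsilon> + K0) = 0"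
    unfolding a1_def BL_def CL_def m_def .
  have "\<epsilon> + K0 - s * \<nu> * (K0 * a1) = (\<Lambda> * \<epsilon> - \<epsilon>c) / (\<Lambda> - 1)"
    using bc2 fp0 f1p0 f0 f10 by simp
  hence E': "\<epsilon> + K0 - s * \<nu> * (K0 * (- 1 / \<xi>1)) = (\<Lambda> * \<epsilon> - \<epsilon>c) / (\<Lambda> - 1)"
    unfolding a1_def .
  have part1: "\<epsilon> / \<epsilon>c =
           (\<nu> * (1 + s + s * \<Lambda> / (\<xi>1 * \<xi>L)) + \<xi>1 + \<xi>L) /
           (\<nu> * (1 + s * \<Lambda> + s * \<Lambda> / (\<xi>1 * \<xi>L)) + \<Lambda> * \<xi>1 + \<xi>L)"
    by (rule final_alg[OF hs h\<nu> h\<Lambda> hc h\<xi>1(1) h\<xi>L(1) gL L' E'])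
  have lam1: "\<nu> / (lam - 1) = s * \<nu>" using hs by (simp add: hlam)
  have n_eq: "\<nu> / (lam - 1) * (\<Lambda> / (\<xi>1 * \<xi>L) + lam) + \<xi>1 + \<xi>L
      = \<nu> * (1 + s + s * \<Lambda> / (\<xi>1 * \<xi>L)) + \<xi>1 + \<xi>L"
    unfolding lam1 using hs by (simp add: hlam field_simps)
  have d_eq: "\<nu> / (lam - 1) * (\<Lambda> + \<Lambda> / (\<xi>1 * \<xi>L) + lam - 1) + \<Lambda> * \<xi>1 + \<xi>L
      = \<nu> * (1 + s * \<Lambda> + s * \<Lambda> / (\<xi>1 * \<xi>L)) + \<Lambda> * \<xi>1 + \<xi>L"
    unfolding lam1 using hs by (simp add: hlam field_simps)
  show ?thesis using part1 n_eq d_eq by simp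
qed

end
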